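(* In the central objective estimation setting described in the context, for every $t$, \[ \mathbb{E}\|g^{0,b}_t(\theta^c_t)\|^2\le2\,\mathbb{E}\|\Delta\theta^c_t\|^2+2\sigma^2n^{-1}. \]
   Context: $n$ agents with environment distributions $\mu^i$ on $\mathcal{S}$, $\mu^0=\frac1n\sum_i\mu^i$; shared $\Phi:\mathcal{S}\to\mathbb{R}^{d\times d}$ with $\|\Phi(s)\|\le1$, $\bar\Phi^0=\mathbb{E}_{\mu^0}\Phi(s)$ with $\frac12(\bar\Phi^0+(\bar\Phi^0)^T)\succ0$; objectives $b^i(s)=\Phi(s)\theta^i_*$; $\bar b^0=\frac1n\sum_i\mathbb{E}_{\mu^i}b^i(s)$; $\theta^c_*$ solves $\bar\Phi^0\theta^c_*=\bar b^0$. Constants: $G_b=\max\{\max_i\|\theta^i_*\|,\|\theta^c_*\|\}$, $G_A\ge\sup_s\|A(s)\|$ for a shared feature map $A$, $G_x\ge0$, and $\sigma=2\max\{G_AG_x,G_b\}$ (so in particular $\sigma\ge2G_b$). Iteration: at each step each agent $i$ draws $s^i_t\sim\mu^i$ independently of everything else, $g^{0,b}_t(\theta)=\frac1n\sum_{i=1}^n(\Phi(s^i_t)\theta-b^i(s^i_t))$, $\theta^c_{t+1}=\theta^c_t-\alpha^b_tg^{0,b}_t(\theta^c_t)$ with deterministic step sizes and arbitrary $\theta^c_0$; $\Delta\theta^c_t=\theta^c_t-\theta^c_*$. *)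

theory Defs
  imports "HOL-Analysis.Analysis" "HOL-Probability.Probability"
begin

definition posdef_mat :: "real^'d^'d \<Rightarrow> bool" where
  "posdef_mat P \<longleftrightarrow> (\<forall>x. x \<noteq> 0 \<longrightarrow> 0 < x \<bullet> (P *v x))"

text \<open>Averaged stochastic semi-gradient
  g^{0,b}(theta) = (1/n) sum_i (Phi(s_i) theta - b^i(s_i)),  b^i(s) = Phi(s) theta^i_*.\<close>
definition g0b :: "nat \<Rightarrow> ('s \<Rightarrow> real^'d^'d) \<Rightarrow> (nat \<Rightarrow> real^'d) \<Rightarrow> (nat \<Rightarrow> 's)
    \<Rightarrow> real^'d \<Rightarrow> real^'d" where
  "g0b n \<Phi> \<theta>s smp \<theta> =
     inverse (real n) *\<^sub>R (\<Sum>i<n. \<Phi> (smp i) *v \<theta> - \<Phi> (smp i) *v \<theta>s i)"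

end

theory Submission imports Defs begin
lemma cont_mv: "continuous_on UNIV (\<lambda>p::((real^'d^'e) \<times> (real^'d)). fst p *v snd p)"
  unfolding matrix_vector_mult_def
  by (intro continuous_on_vec_lambda continuous_intros)

lemma mv_meas[measurable]:
  fixes F :: "'a \<Rightarrow> real^'d^'e"
  assumes "F \<in> borel_measurable M" "v \<in> borel_measurable M"
  shows "(\<lambda>\<omega>. F \<omega> *v v \<omega>) \<in> borel_measurable M"
  by (rule borel_measurable_continuous_Pair[OF assms, where H="(*v)"]) (rule cont_mv)

lemma vec_nth_meas[measurable]:
  fixes f :: "'a \<Rightarrow> real^'d"
  assumes "f \<in> borel_measurable M"
  shows "(\<lambda>\<omega>. f \<omega> $ k) \<in> borel_measurable M"
  using borel_measurable_continuous_on[OF _ assms, where f="\<lambda>x. x $ k"]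
  by (simp add: continuous_on_component continuous_on_id)

lemma lin_mv: "linear (\<lambda>A::real^'d^'e. A *v x)"
  by (auto simp: linear_iff matrix_vector_mult_add_rdistrib vec_eq_iff matrix_vector_mult_def sum_distrib_left sum.distrib algebra_simps)

lemma blin_mv: "bounded_linear (\<lambda>A::real^'d^'e. A *v x)"
  using lin_mv linear_conv_bounded_linear by blast

lemma mv_norm_le:
  fixes A :: "real^'d^'e"
  assumes "onorm (\<lambda>x. A *v x) \<le> 1"
  shows "norm (A *v x) \<le> norm x"
proof -
  have "norm (A *v x) \<le> onorm (\<lambda>x. A *v x) * norm x"
    by (rule onorm) simp
  also have "\<dots> \<le> 1 * norm x" by (rule mult_right_mono[OF assms]) simp
  finally show ?thesis by simp
qed

lemma norm_mat_bound:
  fixes A :: "real^'d^'e"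
  assumes "onorm (\<lambda>x. A *v x) \<le> 1"
  shows "norm A \<le> real CARD('e) * real CARD('d)"
proof -
  have "norm A \<le> (\<Sum>r\<in>UNIV. norm (A $ r))"
    unfolding norm_vec_def by (rule L2_set_le_sum) simp
  also have "\<dots> \<le> (\<Sum>r\<in>(UNIV::'e set). real CARD('d))"
  proof (rule sum_mono)
    fix r
    have "norm (A $ r) \<le> (\<Sum>c\<in>UNIV. \<bar>A $ r $ c\<bar>)" by (rule norm_le_l1_cart)
    also have "\<dots> \<le> (\<Sum>c\<in>(UNIV::'d set). 1)"
      using matrix_component_le_onorm[of A r] assms by (intro sum_mono) (meson order_trans)
    finally show "norm (A $ r) \<le> real CARD('d)" by simp
  qed
  finally show ?thesis by simp
qed

lemma mv_sum: "(\<Sum>i\<in>I. f i) *v (x::real^'d) = (\<Sum>i\<in>I. (f i :: real^'d^'e) *v x)"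
  using linear_sum[OF lin_mv, of f I x] by (simp add: o_def)

lemma mv_scale: "(c *\<^sub>R (A::real^'d^'e)) *v x = c *\<^sub>R (A *v x)"
  by (simp add: vec_eq_iff matrix_vector_mult_def sum_distrib_left mult.assoc)

theorem lemma7:
  fixes n :: nat
    and S :: "'s measure"
    and \<mu> :: "nat \<Rightarrow> 's measure"
    and \<Phi> :: "'s \<Rightarrow> real^'d^'d"
    and \<theta>s :: "nat \<Rightarrow> real^'d"
    and \<theta>cs :: "real^'d"
    and A :: "'s \<Rightarrow> 'm::real_normed_vector"
    and G_A G_x :: real
    and M :: "'w measure"
    and smp :: "nat \<Rightarrow> nat \<Rightarrow> 'w \<Rightarrow> 's"
    and \<alpha> :: "nat \<Rightarrow> real"
    and \<theta>0 :: "real^'d"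
    and \<theta>c :: "nat \<Rightarrow> 'w \<Rightarrow> real^'d"
    and t :: nat
  assumes n_pos: "n \<ge> 1"
    and mu_prob: "\<forall>i<n. prob_space (\<mu> i) \<and> sets (\<mu> i) = sets S"
    and Phi_meas: "\<Phi> \<in> borel_measurable S"
    and Phi_bound: "\<forall>s\<in>space S. onorm (\<lambda>x. \<Phi> s *v x) \<le> 1"
    and Phi_posdef: "posdef_mat ((1/2) *\<^sub>R
          ((\<Sum>i<n. integral\<^sup>L (\<mu> i) \<Phi>) /\<^sub>R real n
           + transpose ((\<Sum>i<n. integral\<^sup>L (\<mu> i) \<Phi>) /\<^sub>R real n)))"
    and theta_c_star: "((\<Sum>i<n. integral\<^sup>L (\<mu> i) \<Phi>) /\<^sub>R real n) *v \<theta>cs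
          = (\<Sum>i<n. integral\<^sup>L (\<mu> i) (\<lambda>s. \<Phi> s *v \<theta>s i)) /\<^sub>R real n"
    and A_bound: "\<forall>s\<in>space S. norm (A s) \<le> G_A"
    and G_x_nonneg: "G_x \<ge> 0"
    and M_prob: "prob_space M"
    and smp_meas: "\<forall>t. \<forall>i<n. smp t i \<in> measurable M S"
    and smp_distr: "\<forall>t. \<forall>i<n. distr M S (smp t i) = \<mu> i"
    and smp_indep: "prob_space.indep_vars M (\<lambda>(t, i). S) (\<lambda>(t, i). smp t i)
                      (UNIV \<times> {..<n})"
    and iter0: "\<forall>\<omega>. \<theta>c 0 \<omega> = \<theta>0"
    and iterSuc: "\<forall>t \<omega>. \<theta>c (Suc t) \<omega> =
          \<theta>c t \<omega> - \<alpha> t *\<^sub>R g0b n \<Phi> \<theta>s (\<lambda>i. smp t i \<omega>) (\<theta>c t \<omega>)"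
  shows "(let G_b = Max (insert (norm \<theta>cs) ((\<lambda>i. norm (\<theta>s i)) ` {..<n}));
              \<sigma> = 2 * max (G_A * G_x) G_b
          in (\<integral>\<omega>. (norm (g0b n \<Phi> \<theta>s (\<lambda>i. smp t i \<omega>) (\<theta>c t \<omega>)))\<^sup>2 \<partial>M)
             \<le> 2 * (\<integral>\<omega>. (norm (\<theta>c t \<omega> - \<theta>cs))\<^sup>2 \<partial>M) + 2 * \<sigma>\<^sup>2 / real n)"
proof -
  interpret M: prob_space M by (rule M_prob)
  have npos: "real n > 0" using n_pos by simp
  have smpm[measurable]: "\<And>k i. i < n \<Longrightarrow> smp k i \<in> measurable M S" using smp_meas by blast
  have smp_sp: "\<And>k i \<omega>. i < n \<Longrightarrow> \<omega> \<in> space M \<Longrightarrow> smp k i \<omega> \<in> space S"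
    using smpm measurable_space by metis
  have PhiB: "\<And>s x. s \<in> space S \<Longrightarrow> norm (\<Phi> s *v x) \<le> norm x"
    using Phi_bound mv_norm_le by blast
  have Phim[measurable]: "\<Phi> \<in> borel_measurable S" by (rule Phi_meas)
  define G_b where "G_b = Max (insert (norm \<theta>cs) ((\<lambda>i. norm (\<theta>s i)) ` {..<n}))"
  define \<sigma> where "\<sigma> = 2 * max (G_A * G_x) G_b"
  have Gb1: "norm \<theta>cs \<le> G_b" unfolding G_b_def by (intro Max_ge) auto
  have Gb2: "\<And>i. i < n \<Longrightarrow> norm (\<theta>s i) \<le> G_b" unfolding G_b_def by (intro Max_ge) auto
  have Gb0: "0 \<le> G_b" using Gb1 norm_ge_zero order_trans by blast
  have sig: "2 * G_b \<le> \<sigma>" unfolding \<sigma>_def by simp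
  have sig0: "0 \<le> \<sigma>" using sig Gb0 by linarith
  have Ybound: "\<And>s i. s \<in> space S \<Longrightarrow> i < n \<Longrightarrow> norm (\<Phi> s *v (\<theta>cs - \<theta>s i)) \<le> \<sigma>"
  proof -
    fix s i assume "s \<in> space S" "i < n"
    then have "norm (\<Phi> s *v (\<theta>cs - \<theta>s i)) \<le> norm (\<theta>cs - \<theta>s i)" using PhiB by blast
    also have "\<dots> \<le> norm \<theta>cs + norm (\<theta>s i)" by (rule norm_triangle_ineq4)
    also have "\<dots> \<le> \<sigma>" using Gb1 Gb2[OF \<open>i < n\<close>] sig by linarith
    finally show "norm (\<Phi> s *v (\<theta>cs - \<theta>s i)) \<le> \<sigma>" .
  qed
  have decomp: "\<And>k \<omega> \<theta>. g0b n \<Phi> \<theta>s (\<lambda>i. smp k i \<omega>) \<theta> =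
      inverse (real n) *\<^sub>R (\<Sum>i<n. \<Phi> (smp k i \<omega>) *v (\<theta> - \<theta>cs))
    + inverse (real n) *\<^sub>R (\<Sum>i<n. \<Phi> (smp k i \<omega>) *v (\<theta>cs - \<theta>s i))"
    unfolding g0b_def scaleR_add_right[symmetric] sum.distrib[symmetric]
    by (simp add: matrix_vector_mult_diff_distrib)
  have avg_bound: "\<And>f c. (\<And>i. i < n \<Longrightarrow> norm (f i :: real^'d) \<le> c) \<Longrightarrow>
      norm (inverse (real n) *\<^sub>R (\<Sum>i<n. f i)) \<le> c"
  proof -
    fix f :: "nat \<Rightarrow> real^'d" and c :: real
    assume h: "\<And>i. i < n \<Longrightarrow> norm (f i) \<le> c"
    have "norm (inverse (real n) *\<^sub>R (\<Sum>i<n. f i)) = inverse (real n) * norm (\<Sum>i<n. f i)"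
      using npos by simp
    also have "\<dots> \<le> inverse (real n) * (\<Sum>i<n. norm (f i))"
      using npos by (intro mult_left_mono norm_sum) auto
    also have "\<dots> \<le> inverse (real n) * (\<Sum>i<n. c)"
      using npos h by (intro mult_left_mono sum_mono) auto
    also have "\<dots> = c" using npos by simp
    finally show "norm (inverse (real n) *\<^sub>R (\<Sum>i<n. f i)) \<le> c" .
  qed
  have Dbound: "\<And>k \<omega> \<theta>. \<omega> \<in> space M \<Longrightarrow>
      norm (inverse (real n) *\<^sub>R (\<Sum>i<n. \<Phi> (smp k i \<omega>) *v (\<theta> - \<theta>cs))) \<le> norm (\<theta> - \<theta>cs)"
    by (rule avg_bound) (use PhiB smp_sp in blast)
  have Zbound: "\<And>k \<omega>. \<omega> \<in> space M \<Longrightarrow>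
      norm (inverse (real n) *\<^sub>R (\<Sum>i<n. \<Phi> (smp k i \<omega>) *v (\<theta>cs - \<theta>s i))) \<le> \<sigma>"
    by (rule avg_bound) (use Ybound smp_sp in blast)
  have gbound: "\<And>k \<omega> \<theta>. \<omega> \<in> space M \<Longrightarrow>
      norm (g0b n \<Phi> \<theta>s (\<lambda>i. smp k i \<omega>) \<theta>) \<le> norm (\<theta> - \<theta>cs) + \<sigma>"
    unfolding decomp using Dbound Zbound norm_triangle_le add_mono by blast
  have theta_meas[measurable]: "\<And>k. \<theta>c k \<in> borel_measurable M"
  proof -
    fix k show "\<theta>c k \<in> borel_measurable M"
    proof (induction k)
      case 0 then show ?case using iter0 by simp
    next
      case (Suc k)
      have e: "\<theta>c (Suc k) = (\<lambda>\<omega>. \<theta>c k \<omega> - \<alpha> k *\<^sub>R (inverse (real n) *\<^sub>R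
          (\<Sum>i<n. \<Phi> (smp k i \<omega>) *v \<theta>c k \<omega> - \<Phi> (smp k i \<omega>) *v \<theta>s i)))"
        using iterSuc by (auto simp: g0b_def)
      show ?case unfolding e using Suc
        by (intro borel_measurable_diff borel_measurable_scaleR borel_measurable_const
              borel_measurable_sum mv_meas measurable_compose[OF smpm Phim]) auto
    qed
  qed
  have theta_bnd: "\<And>k. \<exists>B. \<forall>\<omega>\<in>space M. norm (\<theta>c k \<omega>) \<le> B"
  proof -
    fix k show "\<exists>B. \<forall>\<omega>\<in>space M. norm (\<theta>c k \<omega>) \<le> B"
    proof (induction k)
      case 0 then show ?case using iter0 by auto
    next
      case (Suc k)
      then obtain B where B: "\<forall>\<omega>\<in>space M. norm (\<theta>c k \<omega>) \<le> B" by blast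
      have "norm (\<theta>c (Suc k) \<omega>) \<le> B + \<bar>\<alpha> k\<bar> * (B + norm \<theta>cs + \<sigma>)" if w: "\<omega> \<in> space M" for \<omega>
      proof -
        have "norm (\<theta>c (Suc k) \<omega>) \<le> norm (\<theta>c k \<omega>) + \<bar>\<alpha> k\<bar> * norm (g0b n \<Phi> \<theta>s (\<lambda>i. smp k i \<omega>) (\<theta>c k \<omega>))"
          using iterSuc norm_triangle_ineq4 by (metis norm_scaleR)
        also have "\<dots> \<le> B + \<bar>\<alpha> k\<bar> * (B + norm \<theta>cs + \<sigma>)"
        proof (intro add_mono mult_left_mono)
          show "norm (\<theta>c k \<omega>) \<le> B" using B w by blast
          have "norm (g0b n \<Phi> \<theta>s (\<lambda>i. smp k i \<omega>) (\<theta>c k \<omega>)) \<le> norm (\<theta>c k \<omega> - \<theta>cs) + \<sigma>"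
            using gbound w by blast
          also have "\<dots> \<le> B + norm \<theta>cs + \<sigma>" using B w norm_triangle_ineq4[of "\<theta>c k \<omega>" \<theta>cs] by auto
          finally show "norm (g0b n \<Phi> \<theta>s (\<lambda>i. smp k i \<omega>) (\<theta>c k \<omega>)) \<le> B + norm \<theta>cs + \<sigma>" .
        qed auto
        finally show ?thesis .
      qed
      then show ?case by blast
    qed
  qed
  define Y where "Y i \<omega> = \<Phi> (smp t i \<omega>) *v (\<theta>cs - \<theta>s i)" for i \<omega>
  define m where "m i = (\<integral>\<omega>. Y i \<omega> \<partial>M)" for i
  have Ym[measurable]: "\<And>i. i < n \<Longrightarrow> Y i \<in> borel_measurable M"
    unfolding Y_def by (intro mv_meas measurable_compose[OF smpm Phim] borel_measurable_const)
  have Yb: "\<And>i \<omega>. i < n \<Longrightarrow> \<omega> \<in> space M \<Longrightarrow> norm (Y i \<omega>) \<le> \<sigma>"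
    unfolding Y_def using Ybound smp_sp by blast
  have bint: "\<And>(B::real) f::'w \<Rightarrow> real. f \<in> borel_measurable M \<Longrightarrow> (\<And>\<omega>. \<omega> \<in> space M \<Longrightarrow> \<bar>f \<omega>\<bar> \<le> B) \<Longrightarrow> integrable M f"
    by (metis (no_types, lifting) AE_I2 M.integrable_const_bound real_norm_def)
  have bintv: "\<And>(B::real) f::'w \<Rightarrow> real^'d. f \<in> borel_measurable M \<Longrightarrow> (\<And>\<omega>. \<omega> \<in> space M \<Longrightarrow> norm (f \<omega>) \<le> B) \<Longrightarrow> integrable M f"
    by (metis (no_types, lifting) AE_I2 M.integrable_const_bound real_norm_def)
  have Yint: "\<And>i. i < n \<Longrightarrow> integrable M (Y i)" using Ym Yb bintv by blast
  have Ycomp_int: "\<And>i k. i < n \<Longrightarrow> integrable M (\<lambda>\<omega>. Y i \<omega> $ k)"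
  proof -
    fix i k assume i: "i < n"
    show "integrable M (\<lambda>\<omega>. Y i \<omega> $ k)"
    proof (rule bint[of _ \<sigma>])
      show "(\<lambda>\<omega>. Y i \<omega> $ k) \<in> borel_measurable M" using Ym[OF i] by measurable
      fix \<omega> assume "\<omega> \<in> space M"
      then show "\<bar>Y i \<omega> $ k\<bar> \<le> \<sigma>" using Yb[OF i] component_le_norm_cart order_trans by blast
    qed
  qed
  have mcomp: "\<And>i k. i < n \<Longrightarrow> m i $ k = (\<integral>\<omega>. Y i \<omega> $ k \<partial>M)"
    unfolding m_def using integral_bounded_linear[OF bounded_linear_vec_nth Yint] by metis
  have cross: "\<And>i j. i < n \<Longrightarrow> j < n \<Longrightarrow> i \<noteq> j \<Longrightarrow> (\<integral>\<omega>. Y i \<omega> \<bullet> Y j \<omega> \<partial>M) = m i \<bullet> m j"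
  proof -
    fix i j assume i: "i < n" and j: "j < n" and ij: "i \<noteq> j"
    have ind_k: "(\<integral>\<omega>. Y i \<omega> $ k * Y j \<omega> $ k \<partial>M) = (\<integral>\<omega>. Y i \<omega> $ k \<partial>M) * (\<integral>\<omega>. Y j \<omega> $ k \<partial>M)" for k
    proof -
      define h where "h p s = (\<Phi> s *v (\<theta>cs - \<theta>s (snd p))) $ k" for p :: "nat \<times> nat" and s
      have hm: "h p \<in> borel_measurable S" for p unfolding h_def by measurable
      have ind1: "M.indep_vars (\<lambda>_. borel) (\<lambda>p \<omega>. h p ((\<lambda>(t, i). smp t i) p \<omega>)) (UNIV \<times> {..<n})"
        by (rule M.indep_vars_compose2[OF smp_indep]) (use hm in auto)
      have ind2: "M.indep_vars (\<lambda>_. borel) (\<lambda>p \<omega>. h p ((\<lambda>(t, i). smp t i) p \<omega>)) {(t, i), (t, j)}"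
        by (rule M.indep_vars_subset[OF ind1]) (use i j in auto)
      have Xint: "integrable M (\<lambda>\<omega>. h p ((\<lambda>(t, i). smp t i) p \<omega>))" if "p \<in> {(t, i), (t, j)}" for p
        using that Ycomp_int[OF i, of k] Ycomp_int[OF j, of k] by (auto simp: h_def Y_def)
      have "(\<integral>\<omega>. (\<Prod>p\<in>{(t, i), (t, j)}. h p ((\<lambda>(t, i). smp t i) p \<omega>)) \<partial>M)
          = (\<Prod>p\<in>{(t, i), (t, j)}. \<integral>\<omega>. h p ((\<lambda>(t, i). smp t i) p \<omega>) \<partial>M)"
        by (rule M.indep_vars_lebesgue_integral[OF _ ind2 Xint]) auto
      then show ?thesis using ij by (simp add: h_def Y_def)
    qed
    have pint: "integrable M (\<lambda>\<omega>. Y i \<omega> $ k * Y j \<omega> $ k)" for k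
    proof (rule bint[of _ "\<sigma> * \<sigma>"])
      show "(\<lambda>\<omega>. Y i \<omega> $ k * Y j \<omega> $ k) \<in> borel_measurable M" using Ym[OF i] Ym[OF j] by measurable
      fix \<omega> assume w: "\<omega> \<in> space M"
      have a: "\<bar>Y i \<omega> $ k\<bar> \<le> \<sigma>" using Yb[OF i w] component_le_norm_cart order_trans by blast
      have b: "\<bar>Y j \<omega> $ k\<bar> \<le> \<sigma>" using Yb[OF j w] component_le_norm_cart order_trans by blast
      show "\<bar>Y i \<omega> $ k * Y j \<omega> $ k\<bar> \<le> \<sigma> * \<sigma>"
        unfolding abs_mult by (rule mult_mono[OF a b]) (auto simp: sig0)
    qed
    have "(\<integral>\<omega>. Y i \<omega> \<bullet> Y j \<omega> \<partial>M) = (\<integral>\<omega>. (\<Sum>k\<in>UNIV. Y i \<omega> $ k * Y j \<omega> $ k) \<partial>M)"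
      by (simp add: inner_vec_def)
    also have "\<dots> = (\<Sum>k\<in>UNIV. \<integral>\<omega>. Y i \<omega> $ k * Y j \<omega> $ k \<partial>M)"
      by (rule Bochner_Integration.integral_sum[where f="\<lambda>k \<omega>. Y i \<omega> $ k * Y j \<omega> $ k"]) (rule pint)
    also have "\<dots> = (\<Sum>k\<in>UNIV. m i $ k * m j $ k)"
      using ind_k mcomp[OF i] mcomp[OF j] by simp
    also have "\<dots> = m i \<bullet> m j" by (simp add: inner_vec_def)
    finally show "(\<integral>\<omega>. Y i \<omega> \<bullet> Y j \<omega> \<partial>M) = m i \<bullet> m j" .
  qed
  have msum: "(\<Sum>i<n. m i) = 0"
  proof -
    have mi: "m i = integral\<^sup>L (\<mu> i) \<Phi> *v \<theta>cs - integral\<^sup>L (\<mu> i) (\<lambda>s. \<Phi> s *v \<theta>s i)" if i: "i < n" for i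
    proof -
      interpret Mi: prob_space "\<mu> i" using mu_prob i by blast
      have sets_i: "sets (\<mu> i) = sets S" using mu_prob i by blast
      have space_i: "space (\<mu> i) = space S" using sets_eq_imp_space_eq[OF sets_i] .
      have meas_eq: "borel_measurable (\<mu> i) = borel_measurable S"
        by (rule measurable_cong_sets[OF sets_i refl])
      have Phi_i[measurable]: "\<Phi> \<in> borel_measurable (\<mu> i)" by (subst measurable_cong_sets[OF sets_i refl]) (rule Phim)
      have Phi_int: "integrable (\<mu> i) \<Phi>"
      proof (rule Mi.integrable_const_bound[where B="real CARD('d) * real CARD('d)"])
        show "AE x in \<mu> i. norm (\<Phi> x) \<le> real CARD('d) * real CARD('d)"
          using Phi_bound norm_mat_bound space_i by (intro AE_I2) auto
      qed (rule Phi_i)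
      have int1: "integrable (\<mu> i) (\<lambda>s. \<Phi> s *v \<theta>cs)"
        by (rule integrable_bounded_linear[OF blin_mv Phi_int])
      have int2: "integrable (\<mu> i) (\<lambda>s. \<Phi> s *v \<theta>s i)"
        by (rule integrable_bounded_linear[OF blin_mv Phi_int])
      have "m i = (\<integral>\<omega>. (\<lambda>s. \<Phi> s *v (\<theta>cs - \<theta>s i)) (smp t i \<omega>) \<partial>M)"
        unfolding m_def Y_def by simp
      also have "\<dots> = integral\<^sup>L (distr M S (smp t i)) (\<lambda>s. \<Phi> s *v (\<theta>cs - \<theta>s i))"
        by (rule integral_distr[symmetric]) (use i in measurable)
      also have "\<dots> = integral\<^sup>L (\<mu> i) (\<lambda>s. \<Phi> s *v \<theta>cs - \<Phi> s *v \<theta>s i)"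
        using smp_distr i by (simp add: matrix_vector_mult_diff_distrib)
      also have "\<dots> = integral\<^sup>L (\<mu> i) (\<lambda>s. \<Phi> s *v \<theta>cs) - integral\<^sup>L (\<mu> i) (\<lambda>s. \<Phi> s *v \<theta>s i)"
        by (rule Bochner_Integration.integral_diff[OF int1 int2])
      also have "integral\<^sup>L (\<mu> i) (\<lambda>s. \<Phi> s *v \<theta>cs) = integral\<^sup>L (\<mu> i) \<Phi> *v \<theta>cs"
        by (rule integral_bounded_linear[OF blin_mv Phi_int])
      finally show ?thesis .
    qed
    have "(\<Sum>i<n. m i) = (\<Sum>i<n. integral\<^sup>L (\<mu> i) \<Phi>) *v \<theta>cs - (\<Sum>i<n. integral\<^sup>L (\<mu> i) (\<lambda>s. \<Phi> s *v \<theta>s i))"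
      using mi by (simp add: mv_sum sum_subtractf)
    also have "(\<Sum>i<n. integral\<^sup>L (\<mu> i) \<Phi>) *v \<theta>cs = (\<Sum>i<n. integral\<^sup>L (\<mu> i) (\<lambda>s. \<Phi> s *v \<theta>s i))"
    proof -
      have "inverse (real n) *\<^sub>R ((\<Sum>i<n. integral\<^sup>L (\<mu> i) \<Phi>) *v \<theta>cs)
          = inverse (real n) *\<^sub>R (\<Sum>i<n. integral\<^sup>L (\<mu> i) (\<lambda>s. \<Phi> s *v \<theta>s i))"
        using theta_c_star by (simp add: mv_scale divide_inverse_commute)
      then show ?thesis using npos by simp
    qed
    finally show ?thesis by simp
  qed
  have key: "(\<integral>\<omega>. (norm (\<Sum>i<n. Y i \<omega>))\<^sup>2 \<partial>M) \<le> real n * \<sigma>\<^sup>2"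
  proof -
    have Iint: "integrable M (\<lambda>\<omega>. Y i \<omega> \<bullet> Y j \<omega>)" if i: "i < n" and j: "j < n" for i j
    proof (rule bint[of _ "\<sigma> * \<sigma>"])
      show "(\<lambda>\<omega>. Y i \<omega> \<bullet> Y j \<omega>) \<in> borel_measurable M" using Ym[OF i] Ym[OF j] by measurable
      fix \<omega> assume w: "\<omega> \<in> space M"
      have "\<bar>Y i \<omega> \<bullet> Y j \<omega>\<bar> \<le> norm (Y i \<omega>) * norm (Y j \<omega>)" by (rule Cauchy_Schwarz_ineq2)
      also have "\<dots> \<le> \<sigma> * \<sigma>" by (rule mult_mono[OF Yb[OF i w] Yb[OF j w]]) (auto simp: sig0)
      finally show "\<bar>Y i \<omega> \<bullet> Y j \<omega>\<bar> \<le> \<sigma> * \<sigma>" .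
    qed
    have pw: "(norm (\<Sum>i<n. Y i \<omega>))\<^sup>2 = (\<Sum>i<n. \<Sum>j<n. Y i \<omega> \<bullet> Y j \<omega>)" for \<omega>
    proof -
      have "(norm (\<Sum>i<n. Y i \<omega>))\<^sup>2 = (\<Sum>i<n. Y i \<omega>) \<bullet> (\<Sum>j<n. Y j \<omega>)"
        by (simp add: power2_norm_eq_inner)
      also have "\<dots> = (\<Sum>i<n. Y i \<omega> \<bullet> (\<Sum>j<n. Y j \<omega>))" by (rule inner_sum_left)
      also have "\<dots> = (\<Sum>i<n. \<Sum>j<n. Y i \<omega> \<bullet> Y j \<omega>)" by (simp only: inner_sum_right)
      finally show ?thesis .
    qed
    have "(\<integral>\<omega>. (norm (\<Sum>i<n. Y i \<omega>))\<^sup>2 \<partial>M) = (\<integral>\<omega>. (\<Sum>i<n. \<Sum>j<n. Y i \<omega> \<bullet> Y j \<omega>) \<partial>M)"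
      by (simp add: pw)
    also have "\<dots> = (\<Sum>i<n. \<integral>\<omega>. (\<Sum>j<n. Y i \<omega> \<bullet> Y j \<omega>) \<partial>M)"
      by (rule Bochner_Integration.integral_sum) (auto intro!: Bochner_Integration.integrable_sum Iint)
    also have "\<dots> = (\<Sum>i<n. \<Sum>j<n. \<integral>\<omega>. Y i \<omega> \<bullet> Y j \<omega> \<partial>M)"
      by (intro sum.cong refl Bochner_Integration.integral_sum) (auto intro!: Iint)
    finally have e1: "(\<integral>\<omega>. (norm (\<Sum>i<n. Y i \<omega>))\<^sup>2 \<partial>M) = (\<Sum>i<n. \<Sum>j<n. \<integral>\<omega>. Y i \<omega> \<bullet> Y j \<omega> \<partial>M)" .
    define c where "c i j = (\<integral>\<omega>. Y i \<omega> \<bullet> Y j \<omega> \<partial>M) - m i \<bullet> m j" for i j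
    have "(\<Sum>i<n. \<Sum>j<n. \<integral>\<omega>. Y i \<omega> \<bullet> Y j \<omega> \<partial>M) = (\<Sum>i<n. \<Sum>j<n. c i j) + (\<Sum>i<n. \<Sum>j<n. m i \<bullet> m j)"
      by (simp add: c_def sum.distrib[symmetric])
    also have "(\<Sum>i<n. \<Sum>j<n. m i \<bullet> m j) = (\<Sum>i<n. m i) \<bullet> (\<Sum>j<n. m j)"
      unfolding inner_sum_left by (simp only: inner_sum_right)
    also have "\<dots> = 0" using msum by simp
    also have "(\<Sum>i<n. \<Sum>j<n. c i j) = (\<Sum>i<n. c i i)"
    proof (rule sum.cong[OF refl])
      fix i assume "i \<in> {..<n}"
      then have i: "i < n" by simp
      have "(\<Sum>j<n. c i j) = (\<Sum>j<n. if j = i then c i i else 0)"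
        by (rule sum.cong[OF refl]) (use cross i in \<open>auto simp: c_def\<close>)
      also have "\<dots> = c i i" using i by (simp add: sum.delta)
      finally show "(\<Sum>j<n. c i j) = c i i" .
    qed
    also have "(\<Sum>i<n. c i i) \<le> (\<Sum>i<n. \<sigma>\<^sup>2)"
    proof (rule sum_mono)
      fix i assume "i \<in> {..<n}"
      then have i: "i < n" by simp
      have "(\<integral>\<omega>. Y i \<omega> \<bullet> Y i \<omega> \<partial>M) \<le> (\<integral>\<omega>. \<sigma>\<^sup>2 \<partial>M)"
      proof (rule integral_mono')
        fix \<omega> assume w: "\<omega> \<in> space M"
        have "Y i \<omega> \<bullet> Y i \<omega> = (norm (Y i \<omega>))\<^sup>2" by (simp add: power2_norm_eq_inner)
        also have "\<dots> \<le> \<sigma>\<^sup>2" using Yb[OF i w] by (intro power_mono) auto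
        finally show "Y i \<omega> \<bullet> Y i \<omega> \<le> \<sigma>\<^sup>2" .
      qed auto
      also have "\<dots> = \<sigma>\<^sup>2" by (simp add: M.prob_space)
      finally show "c i i \<le> \<sigma>\<^sup>2" unfolding c_def using inner_ge_zero[of "m i"] by linarith
    qed
    finally show ?thesis using e1 by simp
  qed
  define Z where "Z \<omega> = inverse (real n) *\<^sub>R (\<Sum>i<n. Y i \<omega>)" for \<omega>
  have Zm[measurable]: "Z \<in> borel_measurable M"
    unfolding Z_def by (intro borel_measurable_scaleR borel_measurable_const borel_measurable_sum Ym) auto
  have Zb: "\<And>\<omega>. \<omega> \<in> space M \<Longrightarrow> norm (Z \<omega>) \<le> \<sigma>"
    unfolding Z_def Y_def by (rule Zbound)
  have pw: "(norm (g0b n \<Phi> \<theta>s (\<lambda>i. smp t i \<omega>) (\<theta>c t \<omega>)))\<^sup>2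
      \<le> 2 * (norm (\<theta>c t \<omega> - \<theta>cs))\<^sup>2 + 2 * (norm (Z \<omega>))\<^sup>2" if w: "\<omega> \<in> space M" for \<omega>
  proof -
    have "norm (g0b n \<Phi> \<theta>s (\<lambda>i. smp t i \<omega>) (\<theta>c t \<omega>)) \<le> norm (\<theta>c t \<omega> - \<theta>cs) + norm (Z \<omega>)"
      unfolding decomp Z_def Y_def using Dbound[OF w] norm_triangle_le add_right_mono by blast
    then have "(norm (g0b n \<Phi> \<theta>s (\<lambda>i. smp t i \<omega>) (\<theta>c t \<omega>)))\<^sup>2 \<le> (norm (\<theta>c t \<omega> - \<theta>cs) + norm (Z \<omega>))\<^sup>2"
      by (intro power_mono) auto
    also have "\<dots> \<le> 2 * (norm (\<theta>c t \<omega> - \<theta>cs))\<^sup>2 + 2 * (norm (Z \<omega>))\<^sup>2"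
      by (smt (verit) power2_sum sum_squares_bound)
    finally show ?thesis .
  qed
  obtain B where B: "\<forall>\<omega>\<in>space M. norm (\<theta>c t \<omega>) \<le> B" using theta_bnd by blast
  have intD: "integrable M (\<lambda>\<omega>. (norm (\<theta>c t \<omega> - \<theta>cs))\<^sup>2)"
  proof (rule bint[of _ "(B + norm \<theta>cs)\<^sup>2"])
    show "(\<lambda>\<omega>. (norm (\<theta>c t \<omega> - \<theta>cs))\<^sup>2) \<in> borel_measurable M" by measurable
    fix \<omega> assume w: "\<omega> \<in> space M"
    have "norm (\<theta>c t \<omega> - \<theta>cs) \<le> B + norm \<theta>cs"
      using B w norm_triangle_ineq4[of "\<theta>c t \<omega>" \<theta>cs] by auto
    then show "\<bar>(norm (\<theta>c t \<omega> - \<theta>cs))\<^sup>2\<bar> \<le> (B + norm \<theta>cs)\<^sup>2"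
      by (simp add: power_mono)
  qed
  have intZ: "integrable M (\<lambda>\<omega>. (norm (Z \<omega>))\<^sup>2)"
  proof (rule bint[of _ "\<sigma>\<^sup>2"])
    show "(\<lambda>\<omega>. (norm (Z \<omega>))\<^sup>2) \<in> borel_measurable M" by measurable
    fix \<omega> assume w: "\<omega> \<in> space M"
    show "\<bar>(norm (Z \<omega>))\<^sup>2\<bar> \<le> \<sigma>\<^sup>2" using Zb[OF w] by (simp add: power_mono)
  qed
  have "(\<integral>\<omega>. (norm (g0b n \<Phi> \<theta>s (\<lambda>i. smp t i \<omega>) (\<theta>c t \<omega>)))\<^sup>2 \<partial>M)
      \<le> (\<integral>\<omega>. 2 * (norm (\<theta>c t \<omega> - \<theta>cs))\<^sup>2 + 2 * (norm (Z \<omega>))\<^sup>2 \<partial>M)"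
    by (rule integral_mono') (use pw intD intZ in auto)
  also have "\<dots> = 2 * (\<integral>\<omega>. (norm (\<theta>c t \<omega> - \<theta>cs))\<^sup>2 \<partial>M) + 2 * (\<integral>\<omega>. (norm (Z \<omega>))\<^sup>2 \<partial>M)"
    using intD intZ by simp
  also have "(\<integral>\<omega>. (norm (Z \<omega>))\<^sup>2 \<partial>M) = (inverse (real n))\<^sup>2 * (\<integral>\<omega>. (norm (\<Sum>i<n. Y i \<omega>))\<^sup>2 \<partial>M)"
    using npos by (simp add: Z_def power_mult_distrib)
  also have "\<dots> \<le> (inverse (real n))\<^sup>2 * (real n * \<sigma>\<^sup>2)"
    by (rule mult_left_mono[OF key]) simp
  also have "(inverse (real n))\<^sup>2 * (real n * \<sigma>\<^sup>2) = \<sigma>\<^sup>2 / real n"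
    using npos by (simp add: power2_eq_square field_simps)
  finally show ?thesis unfolding Let_def G_b_def[symmetric] \<sigma>_def[symmetric] by simp
qed
end
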